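(* Let $\mathcal{L}\in\mathrm{Mat}_d(\mathbb{Q})$ have no non-trivial invariant subspace over $\mathbb{Q}$, let $K>0$, and let $A\subset \mathbb{Z}^d$ be a finite set with $|A|=n$ and $|A+\mathcal{L} A|\leq Kn$. If $U$ is a vector subspace of $\mathbb{Q}^d$ of dimension $k<d$, then every translate $u+U$ ($u\in\mathbb{Q}^d$) of $U$ contains at most $(Kn)^{1-2^{-k}}$ points of $A$.
   Context: A non-trivial invariant subspace of $\mathcal{L}$ over $\mathbb{Q}$ is a subspace $W\subseteq\mathbb{Q}^d$ with $W\ne\{0\},\mathbb{Q}^d$ and $\mathcal{L}W\subseteq W$. $\mathcal{L}A=\{\mathcal{L}a:a\in A\}$. *)

theory Defs
  imports "HOL-Analysis.Analysis"
begin

text \<open>Vectors of Q^d are modelled as rat ^ 'd (d = CARD('d)); matrices in Mat_d(Q) as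
  rat ^ 'd ^ 'd acting by the matrix-vector product *v.\<close>

definition nontrivial_invariant_subspace :: "rat ^ 'd ^ 'd \<Rightarrow> (rat ^ 'd) set \<Rightarrow> bool" where
  "nontrivial_invariant_subspace L W \<longleftrightarrow>
     vec.subspace W \<and> W \<noteq> {0} \<and> W \<noteq> UNIV \<and> (\<lambda>w. L *v w) ` W \<subseteq> W"

definition integer_vectors :: "(rat ^ 'd) set" where
  "integer_vectors = {a. \<forall>i. a $ i \<in> \<int>}"

definition sumset :: "(rat ^ 'd) set \<Rightarrow> (rat ^ 'd) set \<Rightarrow> (rat ^ 'd) set" where
  "sumset X Y = {x + y | x y. x \<in> X \<and> y \<in> Y}"

end

theory Submission
  imports Defs
begin

lemma card_fiber_bound:
  assumes "finite X" "\<And>s. s \<in> f ` X \<Longrightarrow> real (card {x\<in>X. f x = s}) \<le> M"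
  shows "real (card X) \<le> real (card (f ` X)) * M"
proof -
  have X: "X = (\<Union>s\<in>f ` X. {x\<in>X. f x = s})" by auto
  have "card X = (\<Sum>s\<in>f ` X. card {x\<in>X. f x = s})"
    by (subst X, rule card_UN_disjoint) (use assms(1) in auto)
  hence "real (card X) = (\<Sum>s\<in>f ` X. real (card {x\<in>X. f x = s}))" by simp
  also have "\<dots> \<le> (\<Sum>s\<in>f ` X. M)" by (rule sum_mono) (use assms(2) in auto)
  finally show ?thesis by simp
qed

lemma sumset_finite: "finite X \<Longrightarrow> finite Y \<Longrightarrow> finite (sumset X Y)"
proof -
  assume "finite X" "finite Y"
  have "sumset X Y = (\<lambda>(x,y). x + y) ` (X \<times> Y)" unfolding sumset_def by auto
  thus ?thesis using \<open>finite X\<close> \<open>finite Y\<close> by simp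
qed

lemma sumset_ge:
  assumes "finite X" "finite Y" "b \<in> Y"
  shows "card X \<le> card (sumset X Y)"
proof -
  have "card X = card ((\<lambda>x. x + b) ` X)" by (simp add: card_image inj_on_def)
  also have "\<dots> \<le> card (sumset X Y)"
    by (rule card_mono[OF sumset_finite[OF assms(1,2)]]) (use assms(3) in \<open>auto simp: sumset_def\<close>)
  finally show ?thesis .
qed

theorem lemma2p4:
  fixes L :: "rat ^ 'd ^ 'd" and K :: real and A :: "(rat ^ 'd) set"
    and n k :: nat and U :: "(rat ^ 'd) set" and u :: "rat ^ 'd"
  assumes "\<not> (\<exists>W. nontrivial_invariant_subspace L W)"
    and "K > 0"
    and "finite A" and "A \<subseteq> integer_vectors" and "card A = n"
    and "real (card (sumset A ((\<lambda>a. L *v a) ` A))) \<le> K * real n"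
    and "vec.subspace U" and "vec.dim U = k" and "k < CARD('d)"
  shows "real (card (A \<inter> (\<lambda>x. u + x) ` U)) \<le> (K * real n) powr (1 - 2 powr (- real k))"
proof -
  note H = assms(1)[unfolded nontrivial_invariant_subspace_def]
  define N where "N = K * real n"
  have N1: "N \<ge> 1" if ne0: "A \<noteq> {}"
  proof -
    obtain a where "a \<in> A" using ne0 by auto
    have "card A \<le> card (sumset A ((\<lambda>a. L *v a) ` A))"
      by (rule sumset_ge) (use assms(3) \<open>a \<in> A\<close> in auto)
    moreover have "card A \<ge> 1" using ne0 assms(3) by (simp add: Suc_le_eq card_gt_0_iff)
    ultimately show ?thesis using assms(6) unfolding N_def by linarith
  qed
  have main: "\<forall>U u. vec.subspace U \<and> vec.dim U \<le> j \<and> j < CARD('d) \<longrightarrow>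
      real (card (A \<inter> (\<lambda>x. u + x) ` U)) \<le> N powr (1 - 2 powr (- real j))" for j
  proof (induction j)
    case 0
    show ?case
    proof (intro allI impI)
      fix U :: "(rat^'d) set" and u :: "rat^'d" assume a: "vec.subspace U \<and> vec.dim U \<le> 0 \<and> 0 < CARD('d)"
      hence "U \<subseteq> {0}" by simp
      hence sub: "A \<inter> (\<lambda>x. u + x) ` U \<subseteq> {u}" by auto
      show "real (card (A \<inter> (\<lambda>x. u + x) ` U)) \<le> N powr (1 - 2 powr (- real 0))"
      proof (cases "A \<inter> (\<lambda>x. u + x) ` U = {}")
        case True thus ?thesis by simp
      next
        case False
        hence "A \<noteq> {}" by auto
        hence "N \<ge> 1" by (rule N1)
        moreover have "card (A \<inter> (\<lambda>x. u + x) ` U) \<le> 1"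
          using card_mono[OF _ sub] by simp
        ultimately show ?thesis by simp
      qed
    qed
  next
    case (Suc j)
    show ?case
    proof (intro allI impI)
      fix U :: "(rat^'d) set" and u :: "rat^'d" assume a: "vec.subspace U \<and> vec.dim U \<le> Suc j \<and> Suc j < CARD('d)"
      define A' where "A' = A \<inter> (\<lambda>x. u + x) ` U"
      define M where "M = N powr (1 - 2 powr (- real j))"
      show "real (card (A \<inter> (\<lambda>x. u + x) ` U)) \<le> N powr (1 - 2 powr (- real (Suc j)))"
      proof (cases "A' = {}")
        case True thus ?thesis unfolding A'_def by simp
      next
        case ne: False
        hence "A \<noteq> {}" unfolding A'_def by auto
        hence N: "N \<ge> 1" by (rule N1)
        have mono: "M \<le> N powr (1 - 2 powr (- real (Suc j)))"
          unfolding M_def using N by (intro powr_mono) auto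
        show ?thesis
        proof (cases "vec.dim U \<le> j")
          case True
          with Suc.IH a have "real (card A') \<le> M" unfolding A'_def M_def by auto
          with mono show ?thesis unfolding A'_def by linarith
        next
          case False
          hence dimU: "vec.dim U = Suc j" using a by auto
          have U0: "U \<noteq> {0}" using dimU by (metis nat.distinct(1) order_refl vec.dim_eq_0)
          have UU: "U \<noteq> UNIV" using dimU a vec_dim_card by (metis less_irrefl)
          have subU: "vec.subspace U" using a by auto
          have inj: "inj ((*v) L)"
          proof (rule ccontr)
            assume "\<not> inj ((*v) L)"
            then obtain x where x: "L *v x = 0" "x \<noteq> 0"
              using vec.inj_iff_eq_0 by auto
            define Z where "Z = {x. L *v x = 0}"
            have sZ: "vec.subspace Z" unfolding Z_def by (rule vec.subspace_kernel)
            show False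
            proof (cases "Z = UNIV")
              case True
              hence "(\<lambda>w. L *v w) ` U \<subseteq> U" using vec.subspace_0[OF subU] unfolding Z_def
                by (auto simp: set_eq_iff)
              thus False using H subU U0 UU by blast
            next
              case False
              have "Z \<noteq> {0}" using x unfolding Z_def by auto
              moreover have "(\<lambda>w. L *v w) ` Z \<subseteq> Z" unfolding Z_def by auto
              ultimately show False using H sZ False by blast
            qed
          qed
          define LU where "LU = (\<lambda>w. L *v w) ` U"
          have sLU: "vec.subspace LU" unfolding LU_def by (rule vec.subspace_image[OF subU])
          define W where "W = U \<inter> LU"
          have sW: "vec.subspace W" unfolding W_def by (rule vec.subspace_inter[OF subU sLU])
          have "W \<noteq> U"
          proof
            assume "W = U"
            hence "U \<subseteq> LU" unfolding W_def by auto
            moreover have "vec.dim LU \<le> vec.dim U" unfolding LU_def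
              by (rule vec.dim_image_le[OF matrix_vector_mul_linear_gen])
            ultimately have "U = LU" using vec.subspace_dim_equal[OF subU sLU] by auto
            hence "(\<lambda>w. L *v w) ` U \<subseteq> U" unfolding LU_def by simp
            thus False using H subU U0 UU by blast
          qed
          hence "W \<subset> U" unfolding W_def by auto
          hence "vec.dim W < vec.dim U"
            using vec.dim_psubset[of W U] sW subU by (simp add: vec.span_eq_iff[THEN iffD2])
          hence dimW: "vec.dim W \<le> j" using dimU by simp
          have fA': "finite A'" unfolding A'_def using assms(3) by simp
          define f where "f = (\<lambda>(a::rat^'d, b). a + L *v b)"
          have fib: "real (card {p\<in>A' \<times> A'. f p = s}) \<le> M" if sS: "s \<in> f ` (A' \<times> A')" for s
          proof -
            obtain a0 b0 where ab0: "a0 \<in> A'" "b0 \<in> A'" "f (a0, b0) = s" using sS by auto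
            define F where "F = {p\<in>A' \<times> A'. f p = s}"
            have "inj_on fst F"
            proof (rule inj_onI)
              fix p q assume "p \<in> F" "q \<in> F" "fst p = fst q"
              hence "L *v snd p = L *v snd q" unfolding F_def f_def
                by (auto simp: case_prod_beta)
              hence "snd p = snd q" using inj by (auto dest: injD)
              thus "p = q" using \<open>fst p = fst q\<close> by (simp add: prod_eq_iff)
            qed
            hence "card F = card (fst ` F)" by (simp add: card_image)
            moreover have "fst ` F \<subseteq> A \<inter> (\<lambda>x. a0 + x) ` W"
            proof
              fix a assume "a \<in> fst ` F"
              then obtain b where ab: "(a, b) \<in> F" by force
              hence abA: "a \<in> A'" "b \<in> A'" "a + L *v b = s" unfolding F_def f_def by auto
              obtain x x0 y y0 where xs: "a = u + x" "a0 = u + x0" "b = u + y" "b0 = u + y0"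
                "x \<in> U" "x0 \<in> U" "y \<in> U" "y0 \<in> U"
                using abA(1,2) ab0(1,2) unfolding A'_def by auto
              have "a - a0 = L *v (b0 - b)"
                using abA(3) ab0(3) unfolding f_def
                by (simp add: matrix_vector_mult_diff_distrib algebra_simps)
              also have "b0 - b = y0 - y" using xs by simp
              finally have e1: "a - a0 \<in> LU" unfolding LU_def
                using vec.subspace_diff[OF subU xs(8) xs(7)] by auto
              have "a - a0 = x - x0" using xs by simp
              hence "a - a0 \<in> U" using vec.subspace_diff[OF subU xs(5) xs(6)] by simp
              with e1 have "a - a0 \<in> W" unfolding W_def by auto
              moreover have "a = a0 + (a - a0)" by simp
              ultimately have "a \<in> (\<lambda>x. a0 + x) ` W" by blast
              thus "a \<in> A \<inter> (\<lambda>x. a0 + x) ` W" using abA(1) unfolding A'_def by auto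
            qed
            hence "card (fst ` F) \<le> card (A \<inter> (\<lambda>x. a0 + x) ` W)"
              by (rule card_mono[rotated]) (use assms(3) in simp)
            moreover have "real (card (A \<inter> (\<lambda>x. a0 + x) ` W)) \<le> M"
              using Suc.IH sW dimW a unfolding M_def by auto
            ultimately show ?thesis unfolding F_def by linarith
          qed
          have "real (card (A' \<times> A')) \<le> real (card (f ` (A' \<times> A'))) * M"
            by (rule card_fiber_bound) (use fA' fib in auto)
          moreover have "f ` (A' \<times> A') \<subseteq> sumset A ((\<lambda>a. L *v a) ` A)"
            unfolding f_def sumset_def A'_def by auto
          hence "card (f ` (A' \<times> A')) \<le> card (sumset A ((\<lambda>a. L *v a) ` A))"
            by (rule card_mono[rotated]) (use sumset_finite[of A "(\<lambda>a. L *v a) ` A"] assms(3) in auto)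
          hence "real (card (f ` (A' \<times> A'))) \<le> N" using assms(6) unfolding N_def by linarith
          moreover have "M \<ge> 0" unfolding M_def by simp
          ultimately have sq: "real (card A') ^ 2 \<le> N * M"
          proof -
            assume h1: "real (card (A' \<times> A')) \<le> real (card (f ` (A' \<times> A'))) * M"
              and h2: "real (card (f ` (A' \<times> A'))) \<le> N" and h3: "M \<ge> 0"
            have "real (card (f ` (A' \<times> A'))) * M \<le> N * M" using h2 h3 by (rule mult_right_mono)
            with h1 show ?thesis by (simp add: card_cartesian_product power2_eq_square)
          qed
          define t where "t = 2 powr (- real j)"
          define P where "P = N powr (1 - 2 powr (- real (Suc j)))"
          have "- real (Suc j) = - real j - 1" by simp
          hence "2 powr (- real (Suc j)) = 2 powr (- real j - 1)" by (simp only:)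
          also have "\<dots> = t / 2" unfolding t_def by (simp add: powr_diff)
          finally have P': "P = N powr (1 - t / 2)" unfolding P_def by (simp only:)
          have "N * M = N powr 1 * N powr (1 - t)" unfolding M_def t_def using N by simp
          also have "\<dots> = N powr (1 + (1 - t))" by (simp only: powr_add)
          also have "\<dots> = N powr (2 - t)" by (simp add: algebra_simps)
          also have "\<dots> = N powr ((1 - t/2) + (1 - t/2))" by simp
          also have "\<dots> = P ^ 2" unfolding P' by (simp only: powr_add power2_eq_square)
          finally have "real (card A') ^ 2 \<le> P ^ 2" using sq by simp
          moreover have "P \<ge> 0" unfolding P_def by simp
          ultimately have "real (card A') \<le> P" using power2_le_imp_le by blast
          thus ?thesis unfolding A'_def P_def .
        qed
      qed
    qed
  qed
  show ?thesis using main[of k] assms(7-9) unfolding N_def by auto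
qed

end
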